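(* Let $(T(t))_{t\ge0}$ be a bounded $C_0$-semigroup on a Banach space $E$ that is norm continuous at infinity. Then for every $t_1,\dots,t_n>0$, $$\ker(T(t_1)-\mathrm{Id})(T(t_2)-\mathrm{Id})\cdots(T(t_n)-\mathrm{Id})\subseteq E_{\mathrm{aap}}.$$
   Context: $E_{\mathrm{aap}}$ is the set of $x\in E$ with $\{T(t)x:t\ge0\}$ relatively compact. With $\omega_0=\omega_0(T)=\inf\{\omega\in\mathbb{R}:\exists M,\ \|T(t)\|\le Me^{\omega t}\ \forall t\ge0\}$ the growth bound, the semigroup is norm continuous at infinity (asymptotically norm continuous) if $\lim_{t\to\infty}\limsup_{h\downarrow0}\|e^{-\omega_0t}T(t)(\mathrm{Id}-e^{-\omega_0h}T(h))\|=0$. *)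

theory Defs
  imports "HOL-Analysis.Analysis"
begin

text \<open>A C_0-semigroup on a Banach space: only the values for t \<ge> 0 matter.\<close>
definition C0_semigroup :: "(real \<Rightarrow> ('a::banach \<Rightarrow>\<^sub>L 'a)) \<Rightarrow> bool" where
  "C0_semigroup T \<longleftrightarrow>
     T 0 = id_blinfun \<and>
     (\<forall>s t. 0 \<le> s \<longrightarrow> 0 \<le> t \<longrightarrow> T (s + t) = T s o\<^sub>L T t) \<and>
     (\<forall>x. ((\<lambda>t. T t x) \<longlongrightarrow> x) (at_right 0))"

definition bounded_semigroup :: "(real \<Rightarrow> ('a::real_normed_vector \<Rightarrow>\<^sub>L 'a)) \<Rightarrow> bool" where
  "bounded_semigroup T \<longleftrightarrow> (\<exists>M. \<forall>t\<ge>0. norm (T t) \<le> M)"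

text \<open>Growth bound, as an extended real (it may be -\<infinity>).\<close>
definition growth_bound :: "(real \<Rightarrow> ('a::real_normed_vector \<Rightarrow>\<^sub>L 'a)) \<Rightarrow> ereal" where
  "growth_bound T = Inf {ereal \<omega> | \<omega>. \<exists>M. \<forall>t\<ge>0. norm (T t) \<le> M * exp (\<omega> * t)}"

text \<open>The defining formula only makes sense for a finite
  growth bound; for growth bound -\<infinity> we impose no condition (this only weakens the
  hypothesis of the theorem).\<close>
definition norm_continuous_at_infinity :: "(real \<Rightarrow> ('a::real_normed_vector \<Rightarrow>\<^sub>L 'a)) \<Rightarrow> bool" where
  "norm_continuous_at_infinity T \<longleftrightarrow>
     (growth_bound T \<noteq> -\<infinity> \<longrightarrow>
       (let w = real_of_ereal (growth_bound T) in
        ((\<lambda>t. Limsup (at_right 0)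
            (\<lambda>h. ereal (norm ((exp (- w * t) *\<^sub>R T t) o\<^sub>L (id_blinfun - exp (- w * h) *\<^sub>R T h)))))
          \<longlongrightarrow> 0) at_top))"

definition E_aap :: "(real \<Rightarrow> ('a::real_normed_vector \<Rightarrow>\<^sub>L 'a)) \<Rightarrow> 'a set" where
  "E_aap T = {x. compact (closure ((\<lambda>t. T t x) ` {0..}))}"

end

theory Submission
  imports Defs
begin

lemma extend_pos:
  fixes P :: "real \<Rightarrow> bool"
  assumes a: "a > 0" and base: "\<And>h. 0 \<le> h \<Longrightarrow> h \<le> a \<Longrightarrow> P h"
    and comb: "\<And>x y. 0 \<le> x \<Longrightarrow> 0 \<le> y \<Longrightarrow> P x \<Longrightarrow> P y \<Longrightarrow> P (x + y)"
    and h: "0 \<le> h"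
  shows "P h"
proof -
  have "\<forall>h. 0 \<le> h \<and> h \<le> real n * a \<longrightarrow> P h" for n
  proof (induction n)
    case 0 then show ?case using base a by auto
  next
    case (Suc n)
    show ?case
    proof (intro allI impI)
      fix h assume hh: "0 \<le> h \<and> h \<le> real (Suc n) * a"
      show "P h"
      proof (cases "h \<le> real n * a")
        case True then show ?thesis using Suc hh by blast
      next
        case False
        have "P (real n * a)" using Suc a by auto
        moreover have "P (h - real n * a)" using base False hh by (auto simp: algebra_simps)
        ultimately have "P (real n * a + (h - real n * a))"
          using comb a False by (intro comb) auto
        then show ?thesis by simp
      qed
    qed
  qed
  moreover obtain n where "h / a < real n" using reals_Archimedean2 by blast
  then have "h \<le> real n * a" using a by (simp add: field_simps)
  ultimately show ?thesis using h by blast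
qed


definition Dk :: "nat \<Rightarrow> real \<Rightarrow> real" where
  "Dk j \<theta> = 1 + 2 * (\<Sum>k\<in>{1..j}. cos (real k * \<theta>))"
definition Fej :: "nat \<Rightarrow> real \<Rightarrow> real" where
  "Fej N \<theta> = (\<Sum>j<N. Dk j \<theta>) / real N"

lemma prod_sum: "2 * cos (A::real) * (1 - cos \<theta>) = 2 * cos A - cos (A + \<theta>) - cos (A - \<theta>)"
  by (simp add: cos_add cos_diff algebra_simps)

lemma Dk_mult: "Dk j \<theta> * (1 - cos \<theta>) = cos (real j * \<theta>) - cos (real (Suc j) * \<theta>)"
proof (induction j)
  case 0 then show ?case by (simp add: Dk_def)
next
  case (Suc j)
  have e: "Dk (Suc j) \<theta> = Dk j \<theta> + 2 * cos (real (Suc j) * \<theta>)"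
    by (simp add: Dk_def)
  have a1: "real (Suc (Suc j)) * \<theta> = real (Suc j) * \<theta> + \<theta>" by (simp add: algebra_simps)
  have a2: "real j * \<theta> = real (Suc j) * \<theta> - \<theta>" by (simp add: algebra_simps)
  have "Dk (Suc j) \<theta> * (1 - cos \<theta>) = cos (real j * \<theta>) - cos (real (Suc j) * \<theta>)
        + 2 * cos (real (Suc j) * \<theta>) * (1 - cos \<theta>)"
    using Suc by (simp add: e algebra_simps)
  also have "\<dots> = cos (real (Suc j) * \<theta>) - cos (real (Suc (Suc j)) * \<theta>)"
    using Suc prod_sum[of "real (Suc j) * \<theta>" \<theta>] unfolding a1 by (subst a2) linarith
  finally show ?case .
qed

lemma Fej_mult: "(\<Sum>j<N. Dk j \<theta>) * (1 - cos \<theta>) = 1 - cos (real N * \<theta>)"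
  unfolding sum_distrib_right Dk_mult by (subst sum_lessThan_telescope') simp

lemma cos_one_mult: "cos \<theta> = 1 \<Longrightarrow> cos (real k * \<theta>) = 1"
proof (induction k)
  case 0 then show ?case by simp
next
  case (Suc k)
  have "sin \<theta> = 0" using Suc.prems sin_cos_squared_add[of \<theta>] by simp
  then show ?case using Suc by (simp add: distrib_right cos_add)
qed

lemma Fej_nonneg: "Fej N \<theta> \<ge> 0"
proof (cases "cos \<theta> = 1")
  case True
  then have "Dk j \<theta> \<ge> 0" for j by (simp add: Dk_def cos_one_mult)
  then show ?thesis unfolding Fej_def by (simp add: sum_nonneg)
next
  case False
  then have c: "1 - cos \<theta> > 0" using cos_le_one[of \<theta>] by linarith
  have "(\<Sum>j<N. Dk j \<theta>) * (1 - cos \<theta>) \<ge> 0" unfolding Fej_mult using cos_le_one by simp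
  then have "(\<Sum>j<N. Dk j \<theta>) \<ge> 0" using c by (simp add: zero_le_mult_iff)
  then show ?thesis unfolding Fej_def by simp
qed

lemma Fej_bound:
  assumes "N > 0" "1 - cos \<theta> \<ge> c" "c > 0"
  shows "Fej N \<theta> \<le> 2 / (real N * c)"
proof -
  have c: "1 - cos \<theta> > 0" using assms by simp
  have "(\<Sum>j<N. Dk j \<theta>) * (1 - cos \<theta>) \<le> 2" unfolding Fej_mult using cos_ge_minus_one[of "real N * \<theta>"] by simp
  then have s: "(\<Sum>j<N. Dk j \<theta>) \<le> 2 / (1 - cos \<theta>)" using c by (simp add: field_simps)
  also have "\<dots> \<le> 2 / c" using assms by (intro divide_left_mono) auto
  finally show ?thesis using assms unfolding Fej_def by (simp add: field_simps)
qed

lemma int_cos_zero: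
  assumes a: "a > 0" and k: "k \<ge> 1"
  shows "((\<lambda>s. cos (real k * (2 * pi * s / a))) has_integral 0) {0..a}"
proof -
  define c where "c = real k * 2 * pi / a"
  have c0: "c \<noteq> 0" using a k by (simp add: c_def)
  have arg: "real k * (2 * pi * s / a) = c * s" for s by (simp add: c_def)
  have "((\<lambda>s. sin (c * s) / c) has_real_derivative cos (c * s)) (at s within {0..a})" for s
    using c0 by (auto intro!: derivative_eq_intros)
  then have "((\<lambda>s. cos (c * s)) has_integral (sin (c * a) / c - sin (c * 0) / c)) {0..a}"
    using a by (intro fundamental_theorem_of_calculus)
      (auto simp: has_real_derivative_iff_has_vector_derivative[symmetric])
  moreover have "sin (c * a) = 0" using sin_int_2pin[of "int k"] a by (simp add: c_def algebra_simps)
  ultimately show ?thesis unfolding arg by simp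
qed

lemma int_Dk:
  assumes a: "a > 0"
  shows "((\<lambda>s. Dk j (2 * pi * s / a)) has_integral a) {0..a}"
proof -
  have "((\<lambda>s. 1 + 2 * (\<Sum>k\<in>{1..j}. cos (real k * (2 * pi * s / a)))) has_integral (a + 2 * (\<Sum>k\<in>{1..j}. 0))) {0..a}"
    using a by (intro has_integral_add has_integral_mult_right has_integral_sum int_cos_zero)
       (use has_integral_const_real[of "1::real" 0 a] in auto)
  then show ?thesis by (simp add: Dk_def)
qed

lemma int_Fej:
  assumes a: "a > 0" and N: "N > 0"
  shows "((\<lambda>s. Fej N (2 * pi * s / a)) has_integral a) {0..a}"
proof -
  have "((\<lambda>s. (\<Sum>j<N. Dk j (2 * pi * s / a)) / real N) has_integral ((\<Sum>j<N. a) / real N)) {0..a}"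
    using a by (intro has_integral_divide has_integral_sum int_Dk) auto
  then show ?thesis using N by (simp add: Fej_def)
qed

lemma cesaro_evconst:
  fixes G :: "nat \<Rightarrow> 'a::real_normed_vector"
  assumes "\<And>j. j \<ge> K \<Longrightarrow> G j = S"
  shows "(\<lambda>N. (1 / real N) *\<^sub>R (\<Sum>j<N. G j)) \<longlonglongrightarrow> S"
proof -
  define R where "R = (\<Sum>j<K. G j - S)"
  have ev: "eventually (\<lambda>N. (1 / real N) *\<^sub>R R + S = (1 / real N) *\<^sub>R (\<Sum>j<N. G j)) sequentially"
    unfolding eventually_sequentially
  proof (intro exI[of _ "Suc K"] allI impI)
    fix N assume N: "N \<ge> Suc K"
    have "(\<Sum>j<N. G j - S) = R"
    proof -
      have "(\<Sum>j<N. G j - S) = (\<Sum>j<K. G j - S) + (\<Sum>j\<in>{K..<N}. G j - S)"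
        using sum.atLeastLessThan_concat[of 0 K N "\<lambda>j. G j - S"] N by (simp add: lessThan_atLeast0)
      also have "(\<Sum>j\<in>{K..<N}. G j - S) = 0" using assms by (intro sum.neutral) auto
      finally show ?thesis by (simp add: R_def)
    qed
    then have "(\<Sum>j<N. G j) = R + real N *\<^sub>R S" by (simp add: sum_subtractf algebra_simps sum_constant_scaleR)
    then show "(1 / real N) *\<^sub>R R + S = (1 / real N) *\<^sub>R (\<Sum>j<N. G j)"
      using N by (simp add: scaleR_add_right)
  qed
  have "(\<lambda>N. (1 / real N) *\<^sub>R R + S) \<longlonglongrightarrow> 0 *\<^sub>R R + S"
    by (intro tendsto_intros)
  then show ?thesis using ev by (simp add: tendsto_cong[OF ev, symmetric])
qed

definition mode :: "(real \<Rightarrow> ('a::real_normed_vector \<Rightarrow>\<^sub>L 'a)) \<Rightarrow> real \<Rightarrow> 'a \<Rightarrow> 'a \<Rightarrow> bool" where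
  "mode T \<nu> v w \<longleftrightarrow> (\<forall>t\<ge>0. T t v = cos (\<nu>*t) *\<^sub>R v + sin (\<nu>*t) *\<^sub>R w \<and>
                            T t w = cos (\<nu>*t) *\<^sub>R w - sin (\<nu>*t) *\<^sub>R v)"

locale bsg =
  fixes T :: "real \<Rightarrow> ('a::banach \<Rightarrow>\<^sub>L 'a)" and M :: real
  assumes c0: "C0_semigroup T" and bnd: "\<And>t. t \<ge> 0 \<Longrightarrow> norm (T t) \<le> M"
begin

lemma T0: "T 0 = id_blinfun" using c0 by (simp add: C0_semigroup_def)
lemma T0a[simp]: "T 0 x = x" by (simp add: T0)
lemma Tadd: "0 \<le> s \<Longrightarrow> 0 \<le> t \<Longrightarrow> T (s + t) y = T s (T t y)"
  using c0 unfolding C0_semigroup_def by simp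
lemma Tcomm: "0 \<le> s \<Longrightarrow> 0 \<le> t \<Longrightarrow> T s (T t y) = T t (T s y)"
  by (metis Tadd add.commute)
lemma M0: "0 \<le> M" using bnd[of 0] norm_ge_zero order_trans by blast
lemma Tnorm: "t \<ge> 0 \<Longrightarrow> norm (T t y) \<le> M * norm y"
  by (meson bnd mult_right_mono norm_blinfun norm_ge_zero order_trans)
lemma right0: "((\<lambda>t. T t x) \<longlongrightarrow> x) (at_right 0)"
  using c0 by (simp add: C0_semigroup_def)

lemma right0_eps:
  assumes "e > 0" shows "\<exists>d>0. \<forall>h. 0 < h \<and> h < d \<longrightarrow> norm (T h x - x) < e"
proof -
  have "eventually (\<lambda>t. dist (T t x) x < e) (at_right 0)"
    using right0 assms tendstoD by blast
  then show ?thesis unfolding eventually_at_right_field by (auto simp: dist_norm)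
qed

lemma orbit_cont: "continuous_on {0..} (\<lambda>t. T t x)"
  unfolding continuous_on_iff
proof (intro ballI allI impI)
  fix t e :: real assume t: "t \<in> {0..}" and e: "e > 0"
  define e' where "e' = e / (M + 1)"
  have e': "e' > 0" using e M0 by (simp add: e'_def)
  obtain d where d: "d > 0" "\<And>h. 0 < h \<Longrightarrow> h < d \<Longrightarrow> norm (T h x - x) < e'"
    using right0_eps[OF e'] by blast
  have key: "norm (T s x - T t x) < e" if s: "s \<ge> 0" "dist s t < d" for s
  proof (cases "s = t")
    case True then show ?thesis using e by simp
  next
    case False
    define lo hi where "lo = min s t" and "hi = max s t"
    have lo: "lo \<ge> 0" "0 < hi - lo" "hi - lo < d" using s t False
      by (auto simp: lo_def hi_def dist_real_def)
    have "T hi x = T lo (T (hi - lo) x)" using Tadd[of lo "hi - lo" x] lo by simp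
    hence "T hi x - T lo x = T lo (T (hi - lo) x - x)" by (simp add: blinfun.diff_right)
    hence "norm (T hi x - T lo x) \<le> M * norm (T (hi - lo) x - x)" using Tnorm lo by simp
    also have "\<dots> \<le> M * e'" using d(2)[OF lo(2) lo(3)] M0 by (intro mult_left_mono) auto
    also have "\<dots> < e" using e M0 by (simp add: e'_def field_simps)
    finally have "norm (T hi x - T lo x) < e" .
    then show ?thesis by (cases "s \<le> t") (auto simp: lo_def hi_def norm_minus_commute)
  qed
  show "\<exists>d>0. \<forall>s\<in>{0..}. dist s t < d \<longrightarrow> dist (T s x) (T t x) < e"
    using key d(1) by (auto simp: dist_norm)
qed

definition g :: "'a \<Rightarrow> real \<Rightarrow> 'a" where "g v s = T (max s 0) v"

lemma g_cont: "continuous_on S (g v)"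
proof -
  have "continuous_on UNIV (\<lambda>s. T (max s 0) v)"
    by (rule continuous_on_compose2[OF orbit_cont[of v]]) (auto intro!: continuous_intros)
  then show ?thesis unfolding g_def by (rule continuous_on_subset) simp
qed

lemma g_pos[simp]: "s \<ge> 0 \<Longrightarrow> g v s = T s v" by (simp add: g_def)

lemma per_add: "0 \<le> s \<Longrightarrow> 0 \<le> a \<Longrightarrow> T a v = v \<Longrightarrow> T (s + a) v = T s v"
  by (simp add: Tadd)

lemma int_scal:
  assumes "continuous_on UNIV \<phi>"
  shows "(\<lambda>s. \<phi> s *\<^sub>R g v s) integrable_on {c..d}"
  by (rule integrable_continuous_real)
     (intro continuous_intros continuous_on_subset[OF assms] g_cont; simp)

lemma shift_int:
  assumes a: "a > 0" and per: "T a v = v" and h: "0 \<le> h" "h \<le> a"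
    and phic: "continuous_on UNIV \<phi>" and phip: "\<And>s. \<phi> (s + a) = \<phi> s"
  shows "integral {0..a} (\<lambda>s. \<phi> s *\<^sub>R T (s + h) v) = integral {0..a} (\<lambda>s. \<phi> (s - h) *\<^sub>R T s v)"
proof -
  define f where "f s = \<phi> (s - h) *\<^sub>R g v s" for s
  have fi: "f integrable_on {c..d}" for c d
  proof -
    have "continuous_on UNIV (\<lambda>s. \<phi> (s - h))"
      by (rule continuous_on_compose2[OF phic]) (auto intro!: continuous_intros)
    then show ?thesis unfolding f_def using int_scal by blast
  qed
  have "integral {0..a} (\<lambda>s. \<phi> s *\<^sub>R T (s + h) v) = integral {0..a} (\<lambda>s. f (s + h))"
    by (rule integral_cong) (use h in \<open>auto simp: f_def\<close>)
  also have "\<dots> = integral {h..a+h} f" using integral_shift_real_ivl[where a=h and b="a+h" and c=h and f=f] by simp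
  also have "\<dots> = integral {h..a} f + integral {a..a+h} f"
    using Henstock_Kurzweil_Integration.integral_combine[where a=h and c=a and b="a+h" and f=f] h fi by simp
  also have "integral {a..a+h} f = integral {0..h} (\<lambda>s. f (s + a))"
    using integral_shift_real_ivl[where a=a and b="a+h" and c=a and f=f] by simp
  also have "\<dots> = integral {0..h} f"
  proof (rule integral_cong)
    fix s assume "s \<in> {0..h}"
    then have s: "s \<ge> 0" by simp
    have "\<phi> (s + a - h) = \<phi> (s - h)" using phip[of "s - h"] by (simp add: algebra_simps)
    then show "f (s + a) = f s" using s a per_add[OF s _ per] by (simp add: f_def)
  qed
  also have "integral {h..a} f + integral {0..h} f = integral {0..a} f"
    using Henstock_Kurzweil_Integration.integral_combine[where a=0 and c=h and b=a and f=f] h fi by (simp add: add.commute)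
  also have "\<dots> = integral {0..a} (\<lambda>s. \<phi> (s - h) *\<^sub>R T s v)"
    by (rule integral_cong) (auto simp: f_def)
  finally show ?thesis .
qed


definition Ck :: "real \<Rightarrow> 'a \<Rightarrow> nat \<Rightarrow> 'a" where
  "Ck a v k = integral {0..a} (\<lambda>s. cos (real k * (2*pi * s /a)) *\<^sub>R g v s)"
definition Sk :: "real \<Rightarrow> 'a \<Rightarrow> nat \<Rightarrow> 'a" where
  "Sk a v k = integral {0..a} (\<lambda>s. sin (real k * (2*pi * s /a)) *\<^sub>R g v s)"

lemma cos_per_nat: "cos (x + 2*pi*real k) = cos x"
  using cos_add[of x "2*pi*real k"] cos_int_2pin[of "int k"] sin_int_2pin[of "int k"] by simp
lemma sin_per_nat: "sin (x + 2*pi*real k) = sin x"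
  using sin_add[of x "2*pi*real k"] cos_int_2pin[of "int k"] sin_int_2pin[of "int k"] by simp

lemma Ck_Sk_base:
  fixes k :: nat
  assumes a: "a > 0" and per: "T a v = v" and h: "0 \<le> h" "h \<le> a"
  defines "\<nu> \<equiv> 2*pi*real k/a"
  shows "T h (Ck a v k) = cos (\<nu>*h) *\<^sub>R Ck a v k + sin (\<nu>*h) *\<^sub>R Sk a v k"
    and "T h (Sk a v k) = cos (\<nu>*h) *\<^sub>R Sk a v k - sin (\<nu>*h) *\<^sub>R Ck a v k"
proof -
  define pc where "pc s = cos (real k * (2*pi * s /a))" for s
  define ps where "ps s = sin (real k * (2*pi * s /a))" for s
  have pcc: "continuous_on UNIV pc" "continuous_on UNIV ps" unfolding pc_def ps_def
    using a by (auto intro!: continuous_intros)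
  have arg: "real k * (2*pi * (s+a)/a) = real k * (2*pi * s /a) + 2*pi*real k" for s
    using a by (simp add: field_simps)
  have pcp: "pc (s + a) = pc s" "ps (s + a) = ps s" for s
    unfolding pc_def ps_def arg cos_per_nat sin_per_nat by simp_all
  have arg2: "real k * (2*pi * (s-h)/a) = real k * (2*pi * s /a) - \<nu>*h" for s
    using a by (simp add: \<nu>_def field_simps)
  have trig: "pc (s - h) = cos (\<nu>*h) * pc s + sin (\<nu>*h) * ps s"
     "ps (s - h) = cos (\<nu>*h) * ps s - sin (\<nu>*h) * pc s" for s
    unfolding pc_def ps_def arg2 cos_diff sin_diff by (simp_all add: algebra_simps)
  have i1: "T h (integral {0..a} (\<lambda>s. p s *\<^sub>R g v s)) = integral {0..a} (\<lambda>s. p (s - h) *\<^sub>R T s v)"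
    if pc: "continuous_on UNIV p" and pp: "\<And>s. p (s + a) = p s" for p
  proof -
    have "T h (integral {0..a} (\<lambda>s. p s *\<^sub>R g v s)) = integral {0..a} (\<lambda>s. T h (p s *\<^sub>R g v s))"
      by (rule integral_blinfun_apply[symmetric]) (rule int_scal[OF pc])
    also have "\<dots> = integral {0..a} (\<lambda>s. p s *\<^sub>R T (s + h) v)"
      by (rule integral_cong) (use h in \<open>auto simp: blinfun.scaleR_right Tadd[symmetric] add.commute\<close>)
    also have "\<dots> = integral {0..a} (\<lambda>s. p (s - h) *\<^sub>R T s v)"
      by (rule shift_int[OF a per h pc pp])
    finally show ?thesis .
  qed
  have intc: "(\<lambda>s. pc s *\<^sub>R g v s) integrable_on {0..a}" "(\<lambda>s. ps s *\<^sub>R g v s) integrable_on {0..a}"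
    using int_scal pcc by auto
  have "T h (Ck a v k) = integral {0..a} (\<lambda>s. pc (s - h) *\<^sub>R T s v)"
    unfolding Ck_def pc_def[symmetric] by (rule i1[OF pcc(1) pcp(1)])
  also have "\<dots> = integral {0..a} (\<lambda>s. cos (\<nu>*h) *\<^sub>R (pc s *\<^sub>R g v s) + sin (\<nu>*h) *\<^sub>R (ps s *\<^sub>R g v s))"
    by (rule integral_cong) (auto simp: trig(1) scaleR_add_left)
  also have "\<dots> = cos (\<nu>*h) *\<^sub>R Ck a v k + sin (\<nu>*h) *\<^sub>R Sk a v k"
    unfolding Ck_def Sk_def pc_def[symmetric] ps_def[symmetric]
    by (simp only: integral_add[OF integrable_cmul[OF intc(1)] integrable_cmul[OF intc(2)]] integral_cmul)
  finally show "T h (Ck a v k) = cos (\<nu>*h) *\<^sub>R Ck a v k + sin (\<nu>*h) *\<^sub>R Sk a v k" .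
  have "T h (Sk a v k) = integral {0..a} (\<lambda>s. ps (s - h) *\<^sub>R T s v)"
    unfolding Sk_def ps_def[symmetric] by (rule i1[OF pcc(2) pcp(2)])
  also have "\<dots> = integral {0..a} (\<lambda>s. cos (\<nu>*h) *\<^sub>R (ps s *\<^sub>R g v s) - sin (\<nu>*h) *\<^sub>R (pc s *\<^sub>R g v s))"
    by (rule integral_cong) (auto simp: trig(2) scaleR_diff_left)
  also have "\<dots> = cos (\<nu>*h) *\<^sub>R Sk a v k - sin (\<nu>*h) *\<^sub>R Ck a v k"
    unfolding Ck_def Sk_def pc_def[symmetric] ps_def[symmetric]
    by (simp only: integral_diff[OF integrable_cmul[OF intc(2)] integrable_cmul[OF intc(1)]] integral_cmul)
  finally show "T h (Sk a v k) = cos (\<nu>*h) *\<^sub>R Sk a v k - sin (\<nu>*h) *\<^sub>R Ck a v k" .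
qed


lemma Ck_mode:
  assumes a: "a > 0" and per: "T a v = v"
  shows "mode T (2*pi*real k/a) (Ck a v k) (Sk a v k)"
proof -
  define \<nu> where "\<nu> = 2*pi*real k/a"
  define P where "P h \<longleftrightarrow> T h (Ck a v k) = cos (\<nu>*h) *\<^sub>R Ck a v k + sin (\<nu>*h) *\<^sub>R Sk a v k \<and>
     T h (Sk a v k) = cos (\<nu>*h) *\<^sub>R Sk a v k - sin (\<nu>*h) *\<^sub>R Ck a v k" for h
  have "P h" if "h \<ge> 0" for h
  proof (rule extend_pos[OF a _ _ that])
    show "P h" if "0 \<le> h" "h \<le> a" for h
      using Ck_Sk_base[OF a per that, of k] unfolding P_def \<nu>_def by simp
    show "P (x + y)" if "0 \<le> x" "0 \<le> y" "P x" "P y" for x y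
    proof -
      have d: "\<nu> * (x + y) = \<nu>*x + \<nu>*y" by (simp add: algebra_simps)
      note hx = that(3)[unfolded P_def] and hy = that(4)[unfolded P_def]
      have "T (x + y) (Ck a v k) = cos (\<nu>*y) *\<^sub>R T x (Ck a v k) + sin (\<nu>*y) *\<^sub>R T x (Sk a v k)"
        using Tadd[OF that(1,2)] hy by (simp add: blinfun.add_right blinfun.scaleR_right)
      also have "\<dots> = cos (\<nu>*y) *\<^sub>R (cos (\<nu>*x) *\<^sub>R Ck a v k + sin (\<nu>*x) *\<^sub>R Sk a v k)
          + sin (\<nu>*y) *\<^sub>R (cos (\<nu>*x) *\<^sub>R Sk a v k - sin (\<nu>*x) *\<^sub>R Ck a v k)"
        by (simp only: hx)
      also have "\<dots> = cos (\<nu>*(x+y)) *\<^sub>R Ck a v k + sin (\<nu>*(x+y)) *\<^sub>R Sk a v k"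
        unfolding d cos_add sin_add by (simp add: algebra_simps scaleR_add_right scaleR_diff_right)
      finally have 1: "T (x + y) (Ck a v k) = cos (\<nu>*(x+y)) *\<^sub>R Ck a v k + sin (\<nu>*(x+y)) *\<^sub>R Sk a v k" .
      have "T (x + y) (Sk a v k) = cos (\<nu>*y) *\<^sub>R T x (Sk a v k) - sin (\<nu>*y) *\<^sub>R T x (Ck a v k)"
        using Tadd[OF that(1,2)] hy by (simp add: blinfun.diff_right blinfun.scaleR_right)
      also have "\<dots> = cos (\<nu>*y) *\<^sub>R (cos (\<nu>*x) *\<^sub>R Sk a v k - sin (\<nu>*x) *\<^sub>R Ck a v k)
          - sin (\<nu>*y) *\<^sub>R (cos (\<nu>*x) *\<^sub>R Ck a v k + sin (\<nu>*x) *\<^sub>R Sk a v k)"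
        by (simp only: hx)
      also have "\<dots> = cos (\<nu>*(x+y)) *\<^sub>R Sk a v k - sin (\<nu>*(x+y)) *\<^sub>R Ck a v k"
        unfolding d cos_add sin_add by (simp add: algebra_simps scaleR_add_right scaleR_diff_right)
      finally show ?thesis using 1 unfolding P_def by simp
    qed
  qed
  then show ?thesis unfolding mode_def P_def \<nu>_def by blast
qed


lemma Fej_cont: "a \<noteq> 0 \<Longrightarrow> N > 0 \<Longrightarrow> continuous_on S (\<lambda>s. Fej N (2 * pi * s / a))"
  unfolding Fej_def Dk_def by (intro continuous_intros) auto

lemma g_bound: "norm (g v s - v) \<le> (M + 1) * norm v"
proof -
  have "norm (g v s) \<le> M * norm v" unfolding g_def by (rule Tnorm) simp
  then show ?thesis using norm_triangle_ineq4[of "g v s" v] by (simp add: algebra_simps)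
qed

lemma g0: "g v 0 = v" by simp

lemma fej_conv:
  assumes a: "a > 0" and per: "T a v = v"
  shows "(\<lambda>N. (1/a) *\<^sub>R integral {0..a} (\<lambda>s. Fej N (2 * pi * s / a) *\<^sub>R g v s)) \<longlonglongrightarrow> v"
proof (rule LIMSEQ_I)
  fix r :: real assume r: "r > 0"
  define e where "e = r / 2"
  have e: "e > 0" using r by (simp add: e_def)
  have gc: "\<forall>x. \<forall>e>0. \<exists>d>0. \<forall>x'. dist x' x < d \<longrightarrow> dist (g v x') (g v x) < e"
    using g_cont[of UNIV v] unfolding continuous_on_iff by blast
  obtain d0 where d0: "d0 > 0" "\<And>s. dist s 0 < d0 \<Longrightarrow> dist (g v s) (g v 0) < e"
    using gc e by blast
  obtain d1 where d1: "d1 > 0" "\<And>s. dist s a < d1 \<Longrightarrow> dist (g v s) (g v a) < e"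
    using gc e by blast
  define \<eta> where "\<eta> = min (min d0 d1) a / 2"
  have \<eta>: "0 < \<eta>" "\<eta> < d0" "\<eta> < d1" "\<eta> \<le> a / 2" using d0 d1 a by (auto simp: \<eta>_def)
  have gv_a: "g v a = v" using a per by simp
  have near: "norm (g v s - v) \<le> e" if "s \<in> {0..a}" "s \<le> \<eta> \<or> a - \<eta> \<le> s" for s
  proof (cases "s \<le> \<eta>")
    case True
    then have "dist s 0 < d0" using that \<eta> by (auto simp: dist_real_def)
    then show ?thesis using d0(2)[of s] by (simp add: dist_norm less_imp_le)
  next
    case False
    then have "dist s a < d1" using that \<eta> by (auto simp: dist_real_def)
    then show ?thesis using d1(2)[of s] gv_a by (simp add: dist_norm less_imp_le)
  qed
  define \<alpha> where "\<alpha> = 2 * pi * \<eta> / a"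
  have \<alpha>: "0 < \<alpha>" "\<alpha> \<le> pi" using \<eta> a by (auto simp: \<alpha>_def field_simps)
  define c where "c = 1 - cos \<alpha>"
  have c: "c > 0"
  proof -
    have "cos \<alpha> < cos 0" using \<alpha> by (intro cos_monotone_0_pi) auto
    then show ?thesis by (simp add: c_def)
  qed
  have mid: "1 - cos (2 * pi * s / a) \<ge> c" if "\<eta> \<le> s" "s \<le> a - \<eta>" for s
  proof -
    define \<theta> where "\<theta> = 2 * pi * s / a"
    have th1: "\<alpha> \<le> \<theta>" unfolding \<theta>_def \<alpha>_def using that a
      by (intro divide_right_mono mult_left_mono) auto
    have "2*pi*(s+\<eta>) \<le> 2*pi*a" using that by (intro mult_left_mono) auto
    then have "2*pi*(s+\<eta>)/a \<le> 2*pi" using a by (simp add: field_simps)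
    then have th2: "\<theta> \<le> 2 * pi - \<alpha>" unfolding \<theta>_def \<alpha>_def by (simp add: add_divide_distrib distrib_left)
    note th = th1 th2
    have "cos \<theta> \<le> cos \<alpha>"
    proof (cases "\<theta> \<le> pi")
      case True then show ?thesis using th \<alpha> by (intro cos_monotone_0_pi_le) auto
    next
      case False
      have "cos (2 * pi - \<theta>) \<le> cos \<alpha>" using th \<alpha> False by (intro cos_monotone_0_pi_le) auto
      then show ?thesis by simp
    qed
    then show ?thesis by (simp add: c_def \<theta>_def)
  qed
  define B where "B = (M + 1) * norm v"
  have B: "B \<ge> 0" using M0 by (simp add: B_def)
  obtain N0 :: nat where N0: "2 * B / (c * e) < real N0" using reals_Archimedean2 by blast
  show "\<exists>no. \<forall>N\<ge>no. norm ((1/a) *\<^sub>R integral {0..a} (\<lambda>s. Fej N (2 * pi * s / a) *\<^sub>R g v s) - v) < r"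
  proof (intro exI[of _ "Suc N0"] allI impI)
    fix N assume N: "N \<ge> Suc N0"
    then have Npos: "N > 0" by simp
    have NB: "2 * B / (real N * c) < e"
    proof -
      have "2 * B / (c * e) < real N" using N0 N by linarith
      then show ?thesis using c e Npos by (simp add: field_simps)
    qed
    define F where "F s = Fej N (2 * pi * s / a)" for s
    have Fc: "continuous_on UNIV F" unfolding F_def using a Npos by (intro Fej_cont) auto
    have Fi: "(F has_integral a) {0..a}" unfolding F_def by (rule int_Fej[OF a Npos])
    have FgI: "(\<lambda>s. F s *\<^sub>R g v s) integrable_on {0..a}" by (rule int_scal[OF Fc])
    have FvI: "((\<lambda>s. F s *\<^sub>R v) has_integral a *\<^sub>R v) {0..a}"
      using has_integral_scaleR_left[OF Fi, of v] .
    have diffI: "(\<lambda>s. F s *\<^sub>R (g v s - v)) integrable_on {0..a}"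
      using integrable_diff[OF FgI has_integral_integrable[OF FvI]] by (simp add: scaleR_diff_right)
    have eq: "integral {0..a} (\<lambda>s. F s *\<^sub>R (g v s - v)) = integral {0..a} (\<lambda>s. F s *\<^sub>R g v s) - a *\<^sub>R v"
      using integral_diff[OF FgI has_integral_integrable[OF FvI]] integral_unique[OF FvI]
      by (simp add: scaleR_diff_right)
    have nc: "continuous_on UNIV (\<lambda>s. F s * norm (g v s - v))"
      by (intro continuous_intros Fc g_cont)
    have bnd_pt: "F s * norm (g v s - v) \<le> e * F s + 2 * B / (real N * c)" if s: "s \<in> {0..a}" for s
    proof (cases "s \<le> \<eta> \<or> a - \<eta> \<le> s")
      case True
      have "F s * norm (g v s - v) \<le> F s * e"
        using near[OF s True] Fej_nonneg unfolding F_def by (intro mult_left_mono) auto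
      moreover have "0 \<le> 2 * B / (real N * c)" using B c by simp
      ultimately show ?thesis by (simp add: mult.commute)
    next
      case False
      have Fb: "F s \<le> 2 / (real N * c)" unfolding F_def using mid[of s] False c Npos
        by (intro Fej_bound) auto
      have "F s * norm (g v s - v) \<le> (2 / (real N * c)) * B"
        using Fb g_bound[of v s] Fej_nonneg[of N] c unfolding B_def F_def
        by (intro mult_mono) auto
      moreover have "0 \<le> e * F s" using e Fej_nonneg by (simp add: F_def)
      ultimately show ?thesis by simp
    qed
    have "norm (integral {0..a} (\<lambda>s. F s *\<^sub>R (g v s - v)))
          \<le> integral {0..a} (\<lambda>s. F s * norm (g v s - v))"
      by (rule integral_norm_bound_integral[OF diffI integrable_continuous_real])
         (use continuous_on_subset[OF nc] in \<open>auto simp: F_def Fej_nonneg abs_of_nonneg\<close>)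
    also have "\<dots> \<le> integral {0..a} (\<lambda>s. e * F s + 2 * B / (real N * c))"
      by (rule integral_le[OF _ _ bnd_pt]) (auto intro: integrable_continuous_real continuous_on_subset[OF nc]
          intro!: continuous_intros continuous_on_subset[OF Fc])
    also have "\<dots> = e * a + a * (2 * B / (real N * c))"
    proof -
      note has_integral_const_real[of "2 * B / (real N * c)" 0 a]
      then have "((\<lambda>s. 2 * B / (real N * c)) has_integral (a * (2 * B / (real N * c)))) {0..a}"
        using a by simp
      then have "((\<lambda>s. e * F s + 2 * B / (real N * c)) has_integral (e * a + a * (2 * B / (real N * c)))) {0..a}"
        by (intro has_integral_add has_integral_mult_right Fi)
      then show ?thesis by (rule integral_unique)
    qed
    finally have I: "norm (integral {0..a} (\<lambda>s. F s *\<^sub>R (g v s - v))) \<le> e * a + a * (2 * B / (real N * c))" .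
    have "(1/a) *\<^sub>R integral {0..a} (\<lambda>s. F s *\<^sub>R g v s) - v = (1/a) *\<^sub>R integral {0..a} (\<lambda>s. F s *\<^sub>R (g v s - v))"
      using a unfolding eq by (simp add: scaleR_diff_right)
    then have "norm ((1/a) *\<^sub>R integral {0..a} (\<lambda>s. F s *\<^sub>R g v s) - v)
       = (1/a) * norm (integral {0..a} (\<lambda>s. F s *\<^sub>R (g v s - v)))" using a by simp
    also have "\<dots> \<le> (1/a) * (e * a + a * (2 * B / (real N * c)))"
      using I a by (intro mult_left_mono) auto
    also have "\<dots> = e + 2 * B / (real N * c)" using a by (simp add: field_simps)
    also have "\<dots> < r" using NB by (simp add: e_def)
    finally show "norm ((1/a) *\<^sub>R integral {0..a} (\<lambda>s. Fej N (2 * pi * s / a) *\<^sub>R g v s) - v) < r"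
      unfolding F_def .
  qed
qed


lemma per_mult: "a \<ge> 0 \<Longrightarrow> T a u = u \<Longrightarrow> T (real n * a) u = u"
proof (induction n)
  case 0 then show ?case by simp
next
  case (Suc n)
  have "T (real (Suc n) * a) u = T (real n * a + a) u" by (simp add: algebra_simps)
  also have "\<dots> = T (real n * a) u" using Suc.prems by (intro per_add) auto
  finally show ?case using Suc by simp
qed

lemma Ck_has: "a \<noteq> 0 \<Longrightarrow> ((\<lambda>s. cos (real k * (2 * pi * s / a)) *\<^sub>R g v s) has_integral Ck a v k) {0..a}"
  unfolding Ck_def by (intro integrable_integral int_scal) (auto intro!: continuous_intros)

lemma fej_int:
  assumes a: "a > 0" and N: "N > 0"
  shows "integral {0..a} (\<lambda>s. Fej N (2 * pi * s / a) *\<^sub>R g v s)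
       = (1 / real N) *\<^sub>R (\<Sum>j<N. Ck a v 0 + 2 *\<^sub>R (\<Sum>k\<in>{1..j}. Ck a v k))"
proof -
  have D: "((\<lambda>s. Dk j (2 * pi * s / a) *\<^sub>R g v s) has_integral (Ck a v 0 + 2 *\<^sub>R (\<Sum>k\<in>{1..j}. Ck a v k))) {0..a}" for j
  proof -
    have "((\<lambda>s. cos (real 0 * (2 * pi * s / a)) *\<^sub>R g v s + 2 *\<^sub>R (\<Sum>k\<in>{1..j}. cos (real k * (2 * pi * s / a)) *\<^sub>R g v s))
        has_integral (Ck a v 0 + 2 *\<^sub>R (\<Sum>k\<in>{1..j}. Ck a v k))) {0..a}"
      using a by (intro has_integral_add has_integral_cmul has_integral_sum Ck_has) auto
    then show ?thesis
      by (rule has_integral_eq[rotated]) (simp add: Dk_def scaleR_add_left scaleR_sum_left flip: scaleR_scaleR)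
  qed
  have "((\<lambda>s. (1 / real N) *\<^sub>R (\<Sum>j<N. Dk j (2 * pi * s / a) *\<^sub>R g v s)) has_integral
        (1 / real N) *\<^sub>R (\<Sum>j<N. Ck a v 0 + 2 *\<^sub>R (\<Sum>k\<in>{1..j}. Ck a v k))) {0..a}"
    by (intro has_integral_cmul has_integral_sum D) auto
  then have "((\<lambda>s. Fej N (2 * pi * s / a) *\<^sub>R g v s) has_integral
        (1 / real N) *\<^sub>R (\<Sum>j<N. Ck a v 0 + 2 *\<^sub>R (\<Sum>k\<in>{1..j}. Ck a v k))) {0..a}"
    by (rule has_integral_eq[rotated]) (simp add: Fej_def scaleR_sum_left[symmetric] divide_inverse mult.commute)
  then show ?thesis by (rule integral_unique)
qed

end


definition modes :: "(real \<Rightarrow> ('a::real_normed_vector \<Rightarrow>\<^sub>L 'a)) \<Rightarrow> 'a set" where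
  "modes T = {u. \<exists>\<nu> w. mode T \<nu> u w}"

locale nsg = bsg +
  assumes nc: "\<And>\<epsilon>. \<epsilon> > 0 \<Longrightarrow> \<exists>t0\<ge>0. \<exists>\<delta>>0. \<forall>h. 0 < h \<longrightarrow> h < \<delta> \<longrightarrow> norm (T t0 o\<^sub>L (id_blinfun - T h)) \<le> \<epsilon>"
begin

lemma Ya_cont:
  assumes a: "a > 0"
  shows "\<exists>\<delta>>0. \<forall>h. 0 < h \<longrightarrow> h < \<delta> \<longrightarrow> (\<forall>u. T a u = u \<longrightarrow> norm (T h u - u) \<le> norm u / 2)"
proof -
  define \<epsilon> where "\<epsilon> = 1 / (2 * (M + 1))"
  have \<epsilon>: "\<epsilon> > 0" using M0 by (simp add: \<epsilon>_def)
  obtain t0 \<delta> where t0: "t0 \<ge> 0" "\<delta> > 0"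
    and nc0: "\<And>h. 0 < h \<Longrightarrow> h < \<delta> \<Longrightarrow> norm (T t0 o\<^sub>L (id_blinfun - T h)) \<le> \<epsilon>"
    using nc[OF \<epsilon>] by blast
  obtain n :: nat where n: "t0 / a < real n" using reals_Archimedean2 by blast
  have na: "t0 \<le> real n * a" using n a by (simp add: field_simps)
  show ?thesis
  proof (intro exI[of _ \<delta>] conjI allI impI t0(2))
    fix h u assume h: "0 < h" "h < \<delta>" and u: "T a u = u"
    have un: "T (real n * a) u = u" using per_mult a u by simp
    have "T (real n * a) (T h u - u) = T h u - u"
      using un Tcomm[of "real n * a" h u] a h by (simp add: blinfun.diff_right)
    moreover have "T (real n * a) w = T (real n * a - t0) (T t0 w)" for w
      using Tadd[of "real n * a - t0" t0 w] na t0 by simp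
    ultimately have eq: "T h u - u = T (real n * a - t0) (T t0 (T h u - u))" by metis
    have "T t0 (T h u - u) = - ((T t0 o\<^sub>L (id_blinfun - T h)) u)"
      by (simp add: blinfun.diff_right blinfun.diff_left)
    then have "norm (T t0 (T h u - u)) = norm ((T t0 o\<^sub>L (id_blinfun - T h)) u)" by simp
    also have "\<dots> \<le> norm (T t0 o\<^sub>L (id_blinfun - T h)) * norm u" by (rule norm_blinfun)
    also have "\<dots> \<le> \<epsilon> * norm u" using nc0[OF h] by (intro mult_right_mono) auto
    finally have n1: "norm (T t0 (T h u - u)) \<le> \<epsilon> * norm u" .
    have "norm (T h u - u) \<le> M * norm (T t0 (T h u - u))"
      using Tnorm[of "real n * a - t0" "T t0 (T h u - u)"] na by (subst eq) simp
    also have "\<dots> \<le> M * (\<epsilon> * norm u)" using n1 M0 by (intro mult_left_mono)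
    finally have "norm (T h u - u) \<le> M * (\<epsilon> * norm u)" .
    also have "\<dots> \<le> norm u / 2"
    proof -
      have me: "M * \<epsilon> \<le> 1 / 2" using M0 by (simp add: \<epsilon>_def field_simps)
      show ?thesis using mult_right_mono[OF me norm_ge_zero[of u]] by (simp add: mult.assoc)
    qed
    finally show "norm (T h u - u) \<le> norm u / 2" .
  qed
qed

lemma Ck_vanish:
  assumes a: "a > 0" and per: "T a v = v"
  shows "\<exists>K. \<forall>k>K. Ck a v k = 0"
proof -
  obtain \<delta> where \<delta>: "\<delta> > 0" and yc: "\<And>h u. 0 < h \<Longrightarrow> h < \<delta> \<Longrightarrow> T a u = u \<Longrightarrow> norm (T h u - u) \<le> norm u / 2"
    using Ya_cont[OF a] by blast
  obtain K :: nat where K: "a / (2 * \<delta>) < real K" using reals_Archimedean2 by blast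
  show ?thesis
  proof (intro exI[of _ K] allI impI)
    fix k assume k: "k > K"
    define \<nu> where "\<nu> = 2 * pi * real k / a"
    define C where "C = Ck a v k"
    have m: "mode T \<nu> C (Sk a v k)" unfolding \<nu>_def C_def by (rule Ck_mode[OF a per])
    have kpos: "real k > 0" using k by simp
    have "a / (2 * \<delta>) < real k" using K k by linarith
    then have hd: "a / (2 * real k) < \<delta>" using \<delta> kpos by (simp add: field_simps)
    have hpos: "a / (2 * real k) > 0" using a kpos by simp
    have nh: "\<nu> * (a / (2 * real k)) = pi" using a kpos by (simp add: \<nu>_def field_simps)
    have na: "\<nu> * a = 2 * pi * of_int (int k)" using a by (simp add: \<nu>_def)
    have c1: "cos (2 * pi * real k) = 1" "sin (2 * pi * real k) = 0"
      using cos_int_2pin[of "int k"] sin_int_2pin[of "int k"] by simp_all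
    have Ca: "T a C = C" using m a c1 unfolding mode_def by (auto simp: na)
    have "T (a / (2 * real k)) C = cos (\<nu> * (a / (2 * real k))) *\<^sub>R C + sin (\<nu> * (a / (2 * real k))) *\<^sub>R Sk a v k"
      using m hpos unfolding mode_def by (meson less_imp_le)
    then have "T (a / (2 * real k)) C = - C" unfolding nh by simp
    then have "norm (- C - C) \<le> norm C / 2" using yc[OF hpos hd Ca] by simp
    moreover have "norm (- C - C) = 2 * norm C"
    proof -
      have "- C - C = - (2 *\<^sub>R C)" by (simp add: scaleR_2)
      then show ?thesis by simp
    qed
    ultimately have "2 * norm C \<le> norm C / 2" by simp
    then show "Ck a v k = 0" unfolding C_def by simp
  qed
qed

lemma periodic_in_span:
  assumes a: "a > 0" and per: "T a v = v"
  shows "v \<in> span (modes T)"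
proof -
  obtain K where K: "\<And>k. k > K \<Longrightarrow> Ck a v k = 0" using Ck_vanish[OF a per] by blast
  define G where "G j = Ck a v 0 + 2 *\<^sub>R (\<Sum>k\<in>{1..j}. Ck a v k)" for j
  have GK: "G j = G K" if "j \<ge> K" for j
  proof -
    have "{1..j} = {1..K} \<union> {K<..j}" using that by auto
    then have "(\<Sum>k\<in>{1..j}. Ck a v k) = (\<Sum>k\<in>{1..K}. Ck a v k) + (\<Sum>k\<in>{K<..j}. Ck a v k)"
      using sum.union_disjoint[of "{1..K}" "{K<..j}" "Ck a v"] by (simp add: ivl_disj_int)
    also have "(\<Sum>k\<in>{K<..j}. Ck a v k) = 0" using K by (intro sum.neutral) auto
    finally show ?thesis by (simp add: G_def)
  qed
  have l1: "(\<lambda>N. (1 / real N) *\<^sub>R (\<Sum>j<N. G j)) \<longlonglongrightarrow> G K"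
    by (rule cesaro_evconst[OF GK])
  have l2: "(\<lambda>N. (1/a) *\<^sub>R integral {0..a} (\<lambda>s. Fej N (2 * pi * s / a) *\<^sub>R g v s)) \<longlonglongrightarrow> v"
    by (rule fej_conv[OF a per])
  have ev: "eventually (\<lambda>N. (1/a) *\<^sub>R integral {0..a} (\<lambda>s. Fej N (2 * pi * s / a) *\<^sub>R g v s)
              = (1/a) *\<^sub>R ((1 / real N) *\<^sub>R (\<Sum>j<N. G j))) sequentially"
    unfolding eventually_sequentially
    by (intro exI[of _ 1] allI impI) (simp add: fej_int[OF a] G_def)
  have "(\<lambda>N. (1/a) *\<^sub>R ((1 / real N) *\<^sub>R (\<Sum>j<N. G j))) \<longlonglongrightarrow> (1/a) *\<^sub>R G K"
    by (intro tendsto_intros l1)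
  then have "(\<lambda>N. (1/a) *\<^sub>R integral {0..a} (\<lambda>s. Fej N (2 * pi * s / a) *\<^sub>R g v s)) \<longlonglongrightarrow> (1/a) *\<^sub>R G K"
    using tendsto_cong[OF ev] by blast
  then have v: "v = (1/a) *\<^sub>R G K" using l2 LIMSEQ_unique by blast
  have Cm: "Ck a v k \<in> span (modes T)" for k
    using Ck_mode[OF a per, of k] by (auto simp: modes_def intro!: span_base)
  have "G K \<in> span (modes T)" unfolding G_def
    by (intro span_add span_scale span_sum Cm)
  then show ?thesis using v span_scale by metis
qed


lemma mode_swap: "mode T \<nu> u w \<Longrightarrow> mode T \<nu> w (- u)"
  unfolding mode_def by (simp add: blinfun.minus_right)

lemma decomp:
  assumes a: "a > 0" and y: "y \<in> span (modes T)"
  shows "\<exists>y0 z. z \<in> span (modes T) \<and> T a y0 = y0 \<and> y = y0 + (T a z - z)"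
  using y
proof (induction rule: span_induct)
  case base
  define Q where "Q y \<longleftrightarrow> (\<exists>y0 z. z \<in> span (modes T) \<and> T a y0 = y0 \<and> y = y0 + (T a z - z))" for y
  have Q0: "Q 0" unfolding Q_def by (intro exI[of _ 0]) (auto simp: span_zero)
  have Qadd: "Q (y + y')" if qq: "Q y" "Q y'" for y y'
  proof -
    obtain y0 z y0' z' where "z \<in> span (modes T)" "T a y0 = y0" "y = y0 + (T a z - z)"
      "z' \<in> span (modes T)" "T a y0' = y0'" "y' = y0' + (T a z' - z')"
      using qq unfolding Q_def by blast
    then show ?thesis unfolding Q_def
      by (intro exI[of _ "y0 + y0'"] exI[of _ "z + z'"])
        (auto simp: blinfun.add_right span_add algebra_simps)
  qed
  have Qscale: "Q (c *\<^sub>R y)" if qq: "Q y" for c y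
  proof -
    obtain y0 z where h: "z \<in> span (modes T)" "T a y0 = y0" "y = y0 + (T a z - z)"
      using qq unfolding Q_def by blast
    have "c *\<^sub>R z \<in> span (modes T)" using h(1) by (rule span_scale)
    moreover have "T a (c *\<^sub>R y0) = c *\<^sub>R y0" using h(2) by (simp add: blinfun.scaleR_right)
    moreover have "c *\<^sub>R y = c *\<^sub>R y0 + (T a (c *\<^sub>R z) - c *\<^sub>R z)"
      unfolding h(3) by (simp add: blinfun.scaleR_right scaleR_add_right scaleR_diff_right)
    ultimately show ?thesis unfolding Q_def by blast
  qed
  have "subspace (Collect Q)" unfolding subspace_def using Q0 Qadd Qscale by auto
  then show ?case unfolding Q_def .
next
  case (step u)
  then obtain \<nu> w where m: "mode T \<nu> u w" by (auto simp: modes_def)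
  have uS: "u \<in> span (modes T)" using m by (auto simp: modes_def intro: span_base)
  have wS: "w \<in> span (modes T)" using mode_swap[OF m] by (auto simp: modes_def intro: span_base)
  define c where "c = cos (\<nu> * a)"
  define s where "s = sin (\<nu> * a)"
  have Tu: "T a u = c *\<^sub>R u + s *\<^sub>R w" and Tw: "T a w = c *\<^sub>R w - s *\<^sub>R u"
    using m a unfolding mode_def c_def s_def by auto
  have cs: "c\<^sup>2 + s\<^sup>2 = 1" unfolding c_def s_def by simp
  show ?case
  proof (cases "c = 1")
    case True
    then have "s = 0" using cs by simp
    then have "T a u = u" using Tu True by simp
    then show ?thesis using span_zero[of "modes T"] by (rule_tac x=u in exI, rule_tac x=0 in exI) auto
  next
    case False
    define D where "D = (c - 1)\<^sup>2 + s\<^sup>2"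
    have D: "D > 0" using False by (simp add: D_def add_pos_nonneg)
    define z where "z = ((c - 1) / D) *\<^sub>R u + (- s / D) *\<^sub>R w"
    have zS: "z \<in> span (modes T)" unfolding z_def using uS wS by (intro span_add span_scale)
    have "T a z - z = ((c - 1) / D) *\<^sub>R (c *\<^sub>R u + s *\<^sub>R w) + (- s / D) *\<^sub>R (c *\<^sub>R w - s *\<^sub>R u) - z"
      unfolding z_def by (simp only: blinfun.add_right blinfun.scaleR_right Tu Tw)
    also have "\<dots> = (((c - 1) / D) * c + (- s / D) * (- s) - (c - 1) / D) *\<^sub>R u
                     + (((c - 1) / D) * s + (- s / D) * c - (- s / D)) *\<^sub>R w"
      unfolding z_def by (simp add: algebra_simps scaleR_add_left scaleR_diff_left)
    also have "((c - 1) / D) * c + (- s / D) * (- s) - (c - 1) / D = 1"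
    proof -
      have "((c - 1) / D) * c + (- s / D) * (- s) - (c - 1) / D = ((c - 1) * c + s * s - (c - 1)) / D"
        using D by (simp add: field_simps)
      also have "(c - 1) * c + s * s - (c - 1) = D" by (simp add: D_def power2_eq_square algebra_simps)
      finally show ?thesis using D by simp
    qed
    also have "((c - 1) / D) * s + (- s / D) * c - (- s / D) = 0"
      using D by (simp add: field_simps)
    finally have "T a z - z = u" by simp
    then show ?thesis using zS by (rule_tac x=0 in exI, rule_tac x=z in exI) auto
  qed
qed

lemma step_span:
  assumes a: "a > 0" and y: "T a x - x \<in> span (modes T)"
  shows "x \<in> span (modes T)"
proof -
  obtain y0 z where z: "z \<in> span (modes T)" and y0: "T a y0 = y0" and eq: "T a x - x = y0 + (T a z - z)"
    using decomp[OF a y] by blast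
  define u where "u = x - z"
  have Tu: "T a u = u + y0" using eq by (simp add: u_def blinfun.diff_right algebra_simps)
  have Tn: "T (real n * a) u = u + real n *\<^sub>R y0" for n
  proof (induction n)
    case 0 then show ?case by simp
  next
    case (Suc n)
    have "T (real (Suc n) * a) u = T a (T (real n * a) u)"
      using Tadd[of a "real n * a" u] a by (simp add: algebra_simps)
    also have "\<dots> = u + y0 + real n *\<^sub>R y0"
      using Suc by (simp add: blinfun.add_right blinfun.scaleR_right Tu y0)
    finally show ?case by (simp add: algebra_simps)
  qed
  have "y0 = 0"
  proof (rule ccontr)
    assume ne: "y0 \<noteq> 0"
    obtain n :: nat where n: "(M + 1) * norm u / norm y0 < real n" using reals_Archimedean2 by blast
    have "real n * norm y0 = norm (T (real n * a) u - u)" using Tn[of n] by simp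
    also have "\<dots> \<le> norm (T (real n * a) u) + norm u" by (rule norm_triangle_ineq4)
    also have "\<dots> \<le> M * norm u + norm u" using Tnorm[of "real n * a" u] a by simp
    finally have "real n * norm y0 \<le> (M + 1) * norm u" by (simp add: algebra_simps)
    then show False using n ne by (simp add: field_simps)
  qed
  then have "T a u = u" using Tu by simp
  then have "u \<in> span (modes T)" by (rule periodic_in_span[OF a])
  then have "u + z \<in> span (modes T)" using z by (rule span_add)
  then show ?thesis by (simp add: u_def)
qed

lemma foldr_span:
  assumes "\<forall>t\<in>set ts. t > 0" and "foldr (\<lambda>t y. (T t - id_blinfun) y) ts x \<in> span (modes T)"
  shows "x \<in> span (modes T)"
  using assms
proof (induction ts arbitrary: x)
  case Nil then show ?case by simp
next
  case (Cons t ts)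
  have t: "t > 0" using Cons.prems by simp
  have "T t (foldr (\<lambda>t y. (T t - id_blinfun) y) ts x) - foldr (\<lambda>t y. (T t - id_blinfun) y) ts x \<in> span (modes T)"
    using Cons.prems by (simp add: blinfun.diff_left)
  then have "foldr (\<lambda>t y. (T t - id_blinfun) y) ts x \<in> span (modes T)" by (rule step_span[OF t])
  then show ?case using Cons.IH Cons.prems by simp
qed

end


lemma sub_compact: "A \<subseteq> K \<Longrightarrow> compact K \<Longrightarrow> compact (closure A)"
  for A K :: "'b::metric_space set"
proof -
  assume "A \<subseteq> K" "compact K"
  then have "closure A \<subseteq> K" by (intro closure_minimal compact_imp_closed)
  then have "closure A = K \<inter> closure A" by blast
  then show ?thesis using compact_Int_closed[OF \<open>compact K\<close> closed_closure[of A]] by simp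
qed

lemma mode_aap:
  fixes T :: "real \<Rightarrow> ('a::banach \<Rightarrow>\<^sub>L 'a)"
  assumes "mode T \<nu> u w" shows "u \<in> E_aap T"
proof -
  define K where "K = (\<lambda>p. fst p *\<^sub>R u + snd p *\<^sub>R w) ` ({-1..1::real} \<times> {-1..1::real})"
  have "compact K" unfolding K_def
    by (intro compact_continuous_image compact_Times compact_Icc) (auto intro!: continuous_intros)
  moreover have "(\<lambda>t. T t u) ` {0..} \<subseteq> K"
  proof
    fix y assume "y \<in> (\<lambda>t. T t u) ` {0..}"
    then obtain t where t: "t \<ge> 0" "y = T t u" by auto
    then have "y = cos (\<nu>*t) *\<^sub>R u + sin (\<nu>*t) *\<^sub>R w" using assms unfolding mode_def by auto
    then show "y \<in> K" unfolding K_def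
      by (intro image_eqI[of _ _ "(cos (\<nu>*t), sin (\<nu>*t))"]) auto
  qed
  ultimately show ?thesis unfolding E_aap_def using sub_compact by blast
qed

lemma aap_subspace:
  fixes T :: "real \<Rightarrow> ('a::banach \<Rightarrow>\<^sub>L 'a)"
  shows "subspace (E_aap T)"
  unfolding subspace_def
proof (intro conjI ballI allI)
  show "0 \<in> E_aap T" unfolding E_aap_def
    by (auto intro!: sub_compact[of _ "{0}"] simp: blinfun.zero_right)
next
  fix x y assume x: "x \<in> E_aap T" and y: "y \<in> E_aap T"
  let ?K = "{p + q | p q. p \<in> closure ((\<lambda>t. T t x) ` {0..}) \<and> q \<in> closure ((\<lambda>t. T t y) ` {0..})}"
  have "compact ?K" using x y unfolding E_aap_def by (intro compact_sums) auto
  moreover have "(\<lambda>t. T t (x + y)) ` {0..} \<subseteq> ?K"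
    by (auto simp: blinfun.add_right intro: closure_subset[THEN subsetD])
  ultimately show "x + y \<in> E_aap T" unfolding E_aap_def using sub_compact by blast
next
  fix c :: real and x assume x: "x \<in> E_aap T"
  let ?K = "(\<lambda>p. c *\<^sub>R p) ` closure ((\<lambda>t. T t x) ` {0..})"
  have "compact ?K" using x unfolding E_aap_def by (intro compact_scaling) auto
  moreover have "(\<lambda>t. T t (c *\<^sub>R x)) ` {0..} \<subseteq> ?K"
    by (auto simp: blinfun.scaleR_right intro: closure_subset[THEN subsetD])
  ultimately show "c *\<^sub>R x \<in> E_aap T" unfolding E_aap_def using sub_compact by blast
qed

lemma span_aap:
  fixes T :: "real \<Rightarrow> ('a::banach \<Rightarrow>\<^sub>L 'a)"
  assumes "x \<in> span (modes T)" shows "x \<in> E_aap T"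
  using assms
proof (induction rule: span_induct)
  case base show ?case using aap_subspace by simp
next
  case (step u) then show ?case by (auto simp: modes_def intro: mode_aap)
qed


lemma injective_neg:
  fixes T :: "real \<Rightarrow> ('a::banach \<Rightarrow>\<^sub>L 'a)"
  assumes b: "bsg T M" and \<omega>: "\<omega> < 0" and bnd': "\<forall>t\<ge>0. norm (T t) \<le> M' * exp (\<omega> * t)"
    and t: "t > 0" and u: "T t u = u"
  shows "u = 0"
proof (rule ccontr)
  assume ne: "u \<noteq> 0"
  interpret bsg T M by (rule b)
  obtain n :: nat where n: "M' / (- \<omega> * t) < real n" using reals_Archimedean2 by blast
  have ct: "- \<omega> * t > 0" using \<omega> t by (simp add: mult_neg_pos)
  have un: "T (real n * t) u = u" using per_mult t u by simp
  have "norm u \<le> norm (T (real n * t)) * norm u" using norm_blinfun[of "T (real n * t)" u] un by simp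
  also have "\<dots> \<le> M' * exp (\<omega> * (real n * t)) * norm u"
    using bnd' t by (intro mult_right_mono) auto
  finally have "1 \<le> M' * exp (\<omega> * (real n * t))" using ne by simp
  then have "exp (- (\<omega> * (real n * t))) \<le> M'"
    by (simp add: exp_minus field_simps)
  moreover have "1 + (- (\<omega> * (real n * t))) \<le> exp (- (\<omega> * (real n * t)))" by (rule exp_ge_add_one_self)
  moreover have "M' < real n * (- \<omega> * t)" using n ct by (simp add: field_simps)
  ultimately show False by (simp add: algebra_simps)
qed

theorem lemma2p13:
  fixes T :: "real \<Rightarrow> ('a::banach \<Rightarrow>\<^sub>L 'a)" and ts :: "real list"
  assumes "C0_semigroup T" and "bounded_semigroup T"
    and "norm_continuous_at_infinity T"
    and "\<forall>t\<in>set ts. t > 0"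
  shows "{x. foldr (\<lambda>t y. (T t - id_blinfun) y) ts x = 0} \<subseteq> E_aap T"
proof
  fix x assume x: "x \<in> {x. foldr (\<lambda>t y. (T t - id_blinfun) y) ts x = 0}"
  obtain M where M: "\<forall>t\<ge>0. norm (T t) \<le> M" using assms(2) unfolding bounded_semigroup_def by blast
  interpret bsg T M using assms(1) M by unfold_locales auto
  have b: "bsg T M" by unfold_locales
  have 0: "0 \<in> E_aap T" using aap_subspace[of T] by (simp add: subspace_def)
  have gb: "growth_bound T \<le> ereal 0"
    unfolding growth_bound_def by (rule Inf_lower) (use M in auto)
  show "x \<in> E_aap T"
  proof (cases "growth_bound T = ereal 0")
    case True
    have lim: "((\<lambda>t. Limsup (at_right 0) (\<lambda>h. ereal (norm (T t o\<^sub>L (id_blinfun - T h))))) \<longlongrightarrow> 0) at_top"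
      using assms(3) True unfolding norm_continuous_at_infinity_def by simp
    have "nsg T M"
    proof (unfold_locales)
      fix \<epsilon> :: real assume e: "\<epsilon> > 0"
      have "eventually (\<lambda>t. Limsup (at_right 0) (\<lambda>h. ereal (norm (T t o\<^sub>L (id_blinfun - T h)))) < ereal \<epsilon>) at_top"
        using lim e by (intro order_tendstoD(2)) auto
      then obtain N where N: "\<And>t. t \<ge> N \<Longrightarrow> Limsup (at_right 0) (\<lambda>h. ereal (norm (T t o\<^sub>L (id_blinfun - T h)))) < ereal \<epsilon>"
        unfolding eventually_at_top_linorder by blast
      define t0 where "t0 = max N 0"
      have "eventually (\<lambda>h. ereal (norm (T t0 o\<^sub>L (id_blinfun - T h))) < ereal \<epsilon>) (at_right 0)"
        using N[of t0] by (intro Limsup_lessD) (simp add: t0_def)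
      then obtain b where "b > 0" "\<And>h. h > 0 \<Longrightarrow> h < b \<Longrightarrow> norm (T t0 o\<^sub>L (id_blinfun - T h)) < \<epsilon>"
        unfolding eventually_at_right_field by auto
      then show "\<exists>t0\<ge>0. \<exists>\<delta>>0. \<forall>h. 0 < h \<longrightarrow> h < \<delta> \<longrightarrow> norm (T t0 o\<^sub>L (id_blinfun - T h)) \<le> \<epsilon>"
        by (intro exI[of _ t0] conjI exI[of _ b]) (auto simp: t0_def intro: less_imp_le)
    qed
    then interpret nsg T M .
    have "foldr (\<lambda>t y. (T t - id_blinfun) y) ts x \<in> span (modes T)" using x span_zero by simp
    then have "x \<in> span (modes T)" using foldr_span assms(4) by blast
    then show ?thesis by (rule span_aap)
  next
    case False
    then have "growth_bound T < ereal 0" using gb by simp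
    then obtain z where z: "z \<in> {ereal \<omega> | \<omega>. \<exists>M. \<forall>t\<ge>0. norm (T t) \<le> M * exp (\<omega> * t)}" "z < ereal 0"
      unfolding growth_bound_def Inf_less_iff by blast
    then obtain \<omega> M' where \<omega>: "\<omega> < 0" "\<forall>t\<ge>0. norm (T t) \<le> M' * exp (\<omega> * t)" by auto
    have "\<forall>t\<in>set ts. t > 0 \<Longrightarrow> foldr (\<lambda>t y. (T t - id_blinfun) y) ts y = 0 \<Longrightarrow> y = 0" for y
    proof (induction ts arbitrary: y)
      case Nil then show ?case by simp
    next
      case (Cons t ts)
      have "T t (foldr (\<lambda>t y. (T t - id_blinfun) y) ts y) = foldr (\<lambda>t y. (T t - id_blinfun) y) ts y"
        using Cons.prems by (simp add: blinfun.diff_left)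
      then have "foldr (\<lambda>t y. (T t - id_blinfun) y) ts y = 0"
        using injective_neg[OF b \<omega>] Cons.prems by auto
      then show ?case using Cons by simp
    qed
    then have "x = 0" using x assms(4) by simp
    then show ?thesis using 0 by simp
  qed
qed

end
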